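(* Let $\gamma\in(0,1)$ and $\alpha_n=\gamma/(1+n\gamma)$ for $n\ge0$. Then for nonnegative integers $n,m$, \[ \mu_{n,m}=\begin{cases}\delta_{n,m}&\text{if } n\le m,\\ \dfrac{\gamma}{1+m\gamma}&\text{if } n>m.\end{cases} \]
   Context: For a polynomial $f(z)=\sum_{k=0}^n a_kz^k$ of degree $n$, write $\overline{f}(z)=\sum_k\overline{a_k}z^k$ and $f^*(z)=z^n\overline{f}(1/z)$. Given $(\alpha_n)$ with $|\alpha_n|<1$, define monic $\Phi_n$ by $\Phi_0=1$, $\Phi_{n+1}(z)=z\Phi_n(z)-\overline{\alpha_n}\Phi_n^*(z)$. Let $\mathcal{L}$ be the unique linear functional on Laurent polynomials with $\mathcal{L}(1)=1$ and $\mathcal{L}(\Phi_m(z)\overline{\Phi_n}(1/z))=0$ for $m\neq n$; set $\langle f,g\rangle=\mathcal{L}(f(z)\overline{g}(1/z))$ and $\mu_{n,m}=\langle\Phi_m(z),z^n\rangle/\langle\Phi_m,\Phi_m\rangle$. *)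

theory Defs
  imports Complex_Main "HOL-Computational_Algebra.Polynomial"
begin

text \<open>Reversed polynomial f*(z) = z^n conj-f(1/z), n = degree f.\<close>
definition pstar :: "complex poly \<Rightarrow> complex poly" where
  "pstar p = (\<Sum>k\<le>degree p. monom (cnj (coeff p (degree p - k))) k)"

fun Phi :: "(nat \<Rightarrow> complex) \<Rightarrow> nat \<Rightarrow> complex poly" where
  "Phi al 0 = 1"
| "Phi al (Suc n) = pCons 0 (Phi al n) - smult (cnj (al n)) (pstar (Phi al n))"

text \<open>A linear functional L on Laurent polynomials is determined by its moments
  c k = L(z^k), k an integer. Then
  <f,g> = L(f(z) conj-g(1/z)) = sum_{i,j} f_i conj(g_j) c(i-j).\<close>
definition ip :: "(int \<Rightarrow> complex) \<Rightarrow> complex poly \<Rightarrow> complex poly \<Rightarrow> complex" where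
  "ip c f g = (\<Sum>i\<le>degree f. \<Sum>j\<le>degree g.
      coeff f i * cnj (coeff g j) * c (int i - int j))"

definition mu :: "(int \<Rightarrow> complex) \<Rightarrow> (nat \<Rightarrow> complex) \<Rightarrow> nat \<Rightarrow> nat \<Rightarrow> complex" where
  "mu c al n m = ip c (Phi al m) (monom 1 n) / ip c (Phi al m) (Phi al m)"

end

theory Submission imports Defs begin
lemma coeff_pstar: "coeff (pstar p) k = (if k \<le> degree p then cnj (coeff p (degree p - k)) else 0)"
  unfolding pstar_def by (simp add: coeff_sum coeff_monom)

lemma aux1: "- complex_of_real b - complex_of_real a * (- complex_of_real b) = - complex_of_real (b * (1 - a))"
  by (simp add: algebra_simps)

lemma coeff_Phi:
  fixes \<gamma> :: real
  assumes g0: "0 < \<gamma>" and g1: "\<gamma> < 1"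
    and al: "\<And>n. al n = complex_of_real (\<gamma> / (1 + real n * \<gamma>))"
  shows "\<forall>k. coeff (Phi al n) k = (if k = n then 1 else if k < n then - complex_of_real (\<gamma>/(1+(real n - 1)*\<gamma>)) else 0)"
proof (induction n)
  case 0
  then show ?case by simp
next
  case (Suc n)
  have deg: "degree (Phi al n) = n"
    using Suc by (metis (no_types, lifting) degree_le le_degree le_antisym not_less_iff_gr_or_eq one_neq_zero)
  have cn: "cnj (al n) = al n" using al by (simp add: complex_eq_iff)
  show ?case
  proof
    fix k
    show "coeff (Phi al (Suc n)) k = (if k = Suc n then 1 else if k < Suc n then - complex_of_real (\<gamma>/(1+(real (Suc n) - 1)*\<gamma>)) else 0)"
    proof (cases k)
      case 0
      have "coeff (Phi al (Suc n)) k = - al n * cnj (coeff (Phi al n) n)"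
        using 0 deg cn by (simp add: coeff_pstar)
      also have "\<dots> = - al n" using Suc.IH by simp
      finally show ?thesis using 0 al by simp
    next
      case (Suc k')
      have "coeff (Phi al (Suc n)) k = coeff (Phi al n) k' - al n * coeff (pstar (Phi al n)) k"
        using Suc cn by simp
      show ?thesis
      proof (cases "k' < n")
        case True
        then have n1: "n \<ge> 1" by simp
        have d1: "1 + (real n - 1) * \<gamma> > 0" using g0 g1 n1
          by (smt (verit) mult_nonneg_nonneg of_nat_1 of_nat_mono)
        have d2: "1 + real n * \<gamma> > 0" using g0 by (simp add: add_pos_nonneg)
        have e: "\<gamma>/(1+(real n - 1)*\<gamma>) * (1 - \<gamma> / (1 + real n * \<gamma>)) = \<gamma> / (1 + real n * \<gamma>)"
        proof -
          have "1 - \<gamma> / (1 + real n * \<gamma>) = (1+(real n - 1)*\<gamma>) / (1 + real n * \<gamma>)"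
            using d2 by (simp add: field_simps)
          then show ?thesis using d1 d2 by simp
        qed
        have "coeff (Phi al (Suc n)) k = - complex_of_real (\<gamma>/(1+(real n - 1)*\<gamma>)) - al n * (- complex_of_real (\<gamma>/(1+(real n - 1)*\<gamma>)))"
        proof -
          have "n - Suc k' < n" "n - Suc k' \<noteq> n" using True by simp_all
          then show ?thesis using True Suc.IH deg cn \<open>k = Suc k'\<close> by (simp add: coeff_pstar)
        qed
        also have "\<dots> = - complex_of_real (\<gamma>/(1+(real n - 1)*\<gamma>) * (1 - \<gamma> / (1 + real n * \<gamma>)))"
          unfolding al[of n] by (rule aux1)
        also have "\<dots> = - complex_of_real (\<gamma> / (1 + real n * \<gamma>))" using e by simp
        finally show ?thesis using True \<open>k = Suc k'\<close> by simp
      next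
        case False
        then show ?thesis using Suc.IH deg cn \<open>k = Suc k'\<close> by (auto simp: coeff_pstar)
      qed
    qed
  qed
qed
lemma deg_Phi:
  fixes \<gamma> :: real
  assumes g0: "0 < \<gamma>" and g1: "\<gamma> < 1"
    and al: "\<And>n. al n = complex_of_real (\<gamma> / (1 + real n * \<gamma>))"
  shows "degree (Phi al n) = n"
  using coeff_Phi[OF assms, of n]
  by (metis (no_types, lifting) degree_le le_degree le_antisym not_less_iff_gr_or_eq one_neq_zero)

lemma sumf: "(\<Sum>i\<le>m. (if i = 0 then 1 else \<gamma>::real)) = 1 + real m * \<gamma>"
  by (induction m) (simp_all add: algebra_simps)

lemma sumw: "(\<Sum>i\<le>m. (if i = n then 1 else \<gamma>::real)) = (real m + 1) * \<gamma> + (if n \<le> m then 1 - \<gamma> else 0)"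
  by (induction m) (auto simp add: algebra_simps)

lemma ip_monom: "ip c p (monom 1 n) = (\<Sum>i\<le>degree p. coeff p i * c (int i - int n))"
  unfolding ip_def
proof (rule sum.cong[OF refl])
  fix i
  have "(\<Sum>j\<le>degree (monom (1::complex) n). coeff p i * cnj (coeff (monom 1 n) j) * c (int i - int j))
     = (\<Sum>j\<le>n. if j = n then coeff p i * c (int i - int n) else 0)"
    by (rule sum.cong) (auto simp: degree_monom_eq coeff_monom)
  also have "\<dots> = coeff p i * c (int i - int n)" by simp
  finally show "(\<Sum>j\<le>degree (monom (1::complex) n). coeff p i * cnj (coeff (monom 1 n) j) * c (int i - int j))
     = coeff p i * c (int i - int n)" .
qed

lemma ip_expand: "ip c p q = (\<Sum>j\<le>degree q. cnj (coeff q j) * ip c p (monom 1 j))"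
  unfolding ip_monom unfolding ip_def
  by (subst sum.swap) (simp add: sum_distrib_left algebra_simps)

lemma moments:
  fixes \<gamma> :: real and al :: "nat \<Rightarrow> complex" and c :: "int \<Rightarrow> complex"
  assumes g0: "0 < \<gamma>" and g1: "\<gamma> < 1"
    and al: "\<And>n. al n = complex_of_real (\<gamma> / (1 + real n * \<gamma>))"
    and c0: "c 0 = 1"
    and orth: "\<And>m n. m \<noteq> n \<Longrightarrow> ip c (Phi al m) (Phi al n) = 0"
  shows "c k = complex_of_real (if k = 0 then 1 else \<gamma>)"
proof -
  note cf = coeff_Phi[OF g0 g1 al]
  note dg = deg_Phi[OF g0 g1 al]
  have pos: "\<forall>i\<le>m. c (int i) = complex_of_real (if i = 0 then 1 else \<gamma>)" for m
  proof (induction m)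
    case 0 then show ?case using c0 by simp
  next
    case (Suc m)
    define b where "b = \<gamma> / (1 + real m * \<gamma>)"
    have d: "1 + real m * \<gamma> > 0" using g0 by (simp add: add_pos_nonneg)
    have "0 = ip c (Phi al (Suc m)) (Phi al 0)" using orth[of "Suc m" 0] by simp
    also have "\<dots> = (\<Sum>i\<le>Suc m. coeff (Phi al (Suc m)) i * c (int i))"
      unfolding ip_def dg by simp
    also have "\<dots> = (\<Sum>i\<le>m. - complex_of_real b * complex_of_real (if i = 0 then 1 else \<gamma>)) + c (int (Suc m))"
      using Suc.IH cf[of "Suc m"] by (simp add: b_def)
    also have "\<dots> = - complex_of_real (b * (\<Sum>i\<le>m. (if i = 0 then 1 else \<gamma>))) + c (int (Suc m))"
      by (simp add: sum_distrib_left sum_negf)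
    also have "\<dots> = - complex_of_real \<gamma> + c (int (Suc m))"
      unfolding sumf b_def using d by simp
    finally have "c (int (Suc m)) = complex_of_real \<gamma>" by (simp add: algebra_simps)
    then show ?case using Suc.IH le_Suc_eq by auto
  qed
  have neg: "\<forall>i\<le>m. c (- int i) = complex_of_real (if i = 0 then 1 else \<gamma>)" for m
  proof (induction m)
    case 0 then show ?case using c0 by simp
  next
    case (Suc m)
    define b where "b = \<gamma> / (1 + real m * \<gamma>)"
    have d: "1 + real m * \<gamma> > 0" using g0 by (simp add: add_pos_nonneg)
    have "0 = ip c (Phi al 0) (Phi al (Suc m))" using orth[of 0 "Suc m"] by simp
    also have "\<dots> = (\<Sum>i\<le>Suc m. cnj (coeff (Phi al (Suc m)) i) * c (- int i))"
      unfolding ip_def dg by simp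
    also have "\<dots> = (\<Sum>i\<le>m. - complex_of_real b * complex_of_real (if i = 0 then 1 else \<gamma>)) + c (- int (Suc m))"
      using Suc.IH cf[of "Suc m"] by (simp add: b_def)
    also have "\<dots> = - complex_of_real (b * (\<Sum>i\<le>m. (if i = 0 then 1 else \<gamma>))) + c (- int (Suc m))"
      by (simp add: sum_distrib_left sum_negf)
    also have "\<dots> = - complex_of_real \<gamma> + c (- int (Suc m))"
      unfolding sumf b_def using d by simp
    finally have "c (- int (Suc m)) = complex_of_real \<gamma>" by (simp add: algebra_simps)
    then show ?case using Suc.IH le_Suc_eq by auto
  qed
  show ?thesis
  proof (cases "k \<ge> 0")
    case True
    then obtain i where "k = int i" by (metis nonneg_eq_int)
    then show ?thesis using pos[of i] by simp
  next
    case False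
    then obtain i where "k = - int i" by (metis minus_minus neg_0_le_iff_le nonneg_eq_int not_le order_less_le)
    then show ?thesis using neg[of i] by simp
  qed
qed

theorem proposition4p5:
  fixes \<gamma> :: real and al :: "nat \<Rightarrow> complex" and c :: "int \<Rightarrow> complex"
  assumes "0 < \<gamma>" and "\<gamma> < 1"
    and "\<And>n. al n = complex_of_real (\<gamma> / (1 + real n * \<gamma>))"
    and "c 0 = 1"
    and "\<And>m n. m \<noteq> n \<Longrightarrow> ip c (Phi al m) (Phi al n) = 0"
  shows "mu c al n m =
           (if n \<le> m then (if n = m then 1 else 0)
            else complex_of_real (\<gamma> / (1 + real m * \<gamma>)))"
proof -
  note g0 = assms(1) and g1 = assms(2) and al = assms(3)
  note cf = coeff_Phi[OF g0 g1 al]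
  note dg = deg_Phi[OF g0 g1 al]
  note cm = moments[OF assms]
  show ?thesis
  proof (cases m)
    case 0
    have "ip c (Phi al m) (monom 1 n) = c (- int n)"
      unfolding ip_monom using 0 by simp
    moreover have "ip c (Phi al m) (Phi al m) = 1" unfolding ip_def using 0 assms(4) by simp
    ultimately show ?thesis unfolding mu_def using 0 cm by auto
  next
    case (Suc m')
    define b where "b = \<gamma> / (1 + real m' * \<gamma>)"
    have d: "1 + real m' * \<gamma> > 0" using g0 by (simp add: add_pos_nonneg)
    define R where "R n = - b * ((real m' + 1) * \<gamma> + (if n \<le> m' then 1 - \<gamma> else 0)) + (if Suc m' = n then 1 else \<gamma>)" for n
    have ipn: "ip c (Phi al m) (monom 1 n) = complex_of_real (R n)" for n
    proof -
      have "ip c (Phi al m) (monom 1 n) = (\<Sum>i\<le>Suc m'. coeff (Phi al m) i * c (int i - int n))"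
        unfolding ip_monom dg Suc ..
      also have "\<dots> = (\<Sum>i\<le>m'. complex_of_real (- b * (if i = n then 1 else \<gamma>))) + complex_of_real (if Suc m' = n then 1 else \<gamma>)"
        using cf[of "Suc m'"] cm Suc by (simp add: b_def)
      also have "\<dots> = complex_of_real (- b * (\<Sum>i\<le>m'. (if i = n then 1 else \<gamma>)) + (if Suc m' = n then 1 else \<gamma>))"
        by (simp add: sum_distrib_left)
      finally show ?thesis unfolding sumw R_def .
    qed
    have Rlow: "R n = 0" if "n \<le> m'" for n
      using that d unfolding R_def b_def by (simp add: field_simps)
    have ipm: "ip c (Phi al m) (Phi al m) = complex_of_real (R m)"
    proof -
      have "ip c (Phi al m) (Phi al m) = (\<Sum>j\<le>Suc m'. cnj (coeff (Phi al m) j) * ip c (Phi al m) (monom 1 j))"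
        using dg[of m] Suc by (subst ip_expand) (simp only:)
      also have "\<dots> = (\<Sum>j\<le>m'. 0) + ip c (Phi al m) (monom 1 m)"
      proof -
        have "(\<Sum>j\<le>m'. cnj (coeff (Phi al m) j) * ip c (Phi al m) (monom 1 j)) = (\<Sum>j\<le>m'. 0)"
          by (rule sum.cong) (simp_all add: ipn Rlow)
        moreover have "coeff (Phi al m) m = 1" using cf[of m] by simp
        ultimately show ?thesis using Suc by (simp del: Phi.simps)
      qed
      finally show ?thesis by (simp add: ipn)
    qed
    have Rm: "R m = 1 - b * (real m' + 1) * \<gamma>" unfolding R_def Suc by (simp add: algebra_simps)
    have bg: "b * (real m' + 1) * \<gamma> < 1"
    proof -
      have "b * (real m' + 1) * \<gamma> = (real m' + 1) * \<gamma> * \<gamma> / (1 + real m' * \<gamma>)" unfolding b_def by simp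
      also have "\<dots> < 1"
      proof -
        have "(real m' + 1) * \<gamma> * \<gamma> < (real m' + 1) * \<gamma> * 1"
          using g0 g1 by (intro mult_strict_left_mono) auto
        also have "\<dots> \<le> 1 + real m' * \<gamma>" using g1 by (simp add: algebra_simps)
        finally show ?thesis using d by simp
      qed
      finally show ?thesis .
    qed
    have Rm0: "R m \<noteq> 0" using Rm bg by simp
    show ?thesis
    proof (cases "n \<le> m")
      case True
      then show ?thesis
      proof (cases "n = m")
        case True then show ?thesis unfolding mu_def ipn ipm using Rm0 by simp
      next
        case False
        then have "n \<le> m'" using \<open>n \<le> m\<close> Suc by simp
        then show ?thesis unfolding mu_def ipn ipm using Rlow False \<open>n \<le> m\<close> by simp
      qed
    next
      case False
      have Rn: "R n = \<gamma> * (1 - b * (real m' + 1))" unfolding R_def using False Suc by (simp add: algebra_simps)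
      have "R n / R m = \<gamma> / (1 + real m * \<gamma>)"
      proof -
        have e1: "1 - b * (real m' + 1) = (1 - \<gamma>) / (1 + real m' * \<gamma>)"
          unfolding b_def using d by (simp add: field_simps)
        have e2: "1 - b * (real m' + 1) * \<gamma> = (1 - \<gamma>) * (1 + real m * \<gamma>) / (1 + real m' * \<gamma>)"
          unfolding b_def using d Suc by (simp add: field_simps)
        have p: "1 + real m * \<gamma> > 0" using g0 by (simp add: add_pos_nonneg)
        have gen: "g * (u / D) / (u * P / D) = g / P" if "u \<noteq> 0" "D \<noteq> 0" for g u D P :: real
          using that by (simp add: field_simps)
        show ?thesis unfolding Rn Rm e1 e2 using d g1 by (intro gen) auto
      qed
      then have "complex_of_real (R n) / complex_of_real (R m) = complex_of_real (\<gamma> / (1 + real m * \<gamma>))"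
        by (metis of_real_divide)
      then show ?thesis unfolding mu_def ipn ipm using False by (simp only: if_False)
    qed
  qed
qed

end
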